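(* For integers $k\ge 1$ and $l\ge 2$, as $n\to\infty$, $$ex(n,P_l,C_{2k+1})=(1+o(1))\left(\frac n2\right)^l.$$
   Context: $C_k$ denotes the cycle with $k$ vertices and $P_l$ the path with $l$ vertices. $ex(n,H,F)$ is the maximum number of subgraphs isomorphic to $H$ in an $n$-vertex graph containing no subgraph isomorphic to $F$. *)

theory Defs
  imports Complex_Main "HOL-Library.Landau_Symbols"
begin

definition simple_graph :: "'a set \<Rightarrow> 'a set set \<Rightarrow> bool" where
  "simple_graph V E \<longleftrightarrow> finite V \<and>
     (\<forall>e\<in>E. \<exists>x y. x \<noteq> y \<and> e = {x, y} \<and> x \<in> V \<and> y \<in> V)"

definition graph_iso :: "'a set \<Rightarrow> 'a set set \<Rightarrow> 'b set \<Rightarrow> 'b set set \<Rightarrow> bool" where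
  "graph_iso V1 E1 V2 E2 \<longleftrightarrow> (\<exists>f. bij_betw f V1 V2 \<and>
     (\<forall>x\<in>V1. \<forall>y\<in>V1. {x, y} \<in> E1 \<longleftrightarrow> {f x, f y} \<in> E2))"

definition copies :: "'b set \<Rightarrow> 'b set set \<Rightarrow> 'a set \<Rightarrow> 'a set set \<Rightarrow> ('a set \<times> 'a set set) set" where
  "copies VH EH V E = {(V', E'). V' \<subseteq> V \<and> E' \<subseteq> E \<and> (\<forall>e\<in>E'. e \<subseteq> V') \<and>
       graph_iso VH EH V' E'}"

definition count_copies :: "'b set \<Rightarrow> 'b set set \<Rightarrow> 'a set \<Rightarrow> 'a set set \<Rightarrow> nat" where
  "count_copies VH EH V E = card (copies VH EH V E)"

definition H_free :: "'b set \<Rightarrow> 'b set set \<Rightarrow> 'a set \<Rightarrow> 'a set set \<Rightarrow> bool" where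
  "H_free VF EF V E \<longleftrightarrow> copies VF EF V E = {}"

definition gen_ex :: "nat \<Rightarrow> 'b set \<times> 'b set set \<Rightarrow> 'c set \<times> 'c set set \<Rightarrow> nat" where
  "gen_ex n H F = Max {count_copies (fst H) (snd H) {0..<n} E | E.
       simple_graph {0..<n} E \<and> H_free (fst F) (snd F) {0..<n} E}"

definition path_graph :: "nat \<Rightarrow> nat set \<times> nat set set" where
  "path_graph l = ({0..<l}, {{i, Suc i} | i. Suc i < l})"

definition cycle_graph :: "nat \<Rightarrow> nat set \<times> nat set set" where
  "cycle_graph k = ({0..<k}, {{i, (Suc i) mod k} | i. i < k})"

end

theory Submission
  imports Defs
begin


definition OP :: "nat set set \<Rightarrow> nat \<Rightarrow> nat \<Rightarrow> nat list set" where
  "OP E n l = {xs. length xs = l \<and> distinct xs \<and> set xs \<subseteq> {0..<n} \<and>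
      (\<forall>i. Suc i < l \<longrightarrow> {xs!i, xs!Suc i} \<in> E)}"

definition pedges :: "nat list \<Rightarrow> nat set set" where
  "pedges xs = {{xs!i, xs!Suc i} | i. Suc i < length xs}"

lemma simple_edge:
  assumes "simple_graph {0..<n} E" "{x,y} \<in> E"
  shows "x \<noteq> y \<and> x < n \<and> y < n"
  using assms unfolding simple_graph_def by (fastforce simp: doubleton_eq_iff)

lemma doubleton_inj:
  assumes "inj_on f A" "a\<in>A" "b\<in>A" "c\<in>A" "d\<in>A" "{f a, f b} = {f c, f d}"
  shows "{a,b} = {c,d}"
  using assms by (auto simp: doubleton_eq_iff inj_on_eq_iff)

lemma finite_OP: "finite (OP E n l)"
proof -
  have "OP E n l \<subseteq> {xs. set xs \<subseteq> {0..<n} \<and> length xs = l}" by (auto simp: OP_def)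
  thus ?thesis using finite_lists_length_eq[of "{0..<n}" l] finite_subset by auto
qed

lemma OP_copy:
  assumes "xs \<in> OP E n l"
  shows "(set xs, pedges xs) \<in> copies {0..<l} {{i, Suc i} | i. Suc i < l} {0..<n} E"
proof -
  from assms have len: "length xs = l" and d: "distinct xs" and s: "set xs \<subseteq> {0..<n}"
    and e: "\<forall>i. Suc i < l \<longrightarrow> {xs!i, xs!Suc i} \<in> E" by (auto simp: OP_def)
  have bij: "bij_betw (nth xs) {0..<l} (set xs)" using d len by (intro bij_betw_nth) auto
  have inj: "inj_on (nth xs) {0..<l}" using bij bij_betw_def by blast
  have iso: "{x,y} \<in> {{i, Suc i} | i. Suc i < l} \<longleftrightarrow> {xs!x, xs!y} \<in> pedges xs"
    if x: "x \<in> {0..<l}" and y: "y \<in> {0..<l}" for x y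
  proof
    assume "{x,y} \<in> {{i, Suc i} | i. Suc i < l}"
    then obtain i where i: "{x,y} = {i, Suc i}" "Suc i < l" by auto
    hence "{xs!x, xs!y} = {xs!i, xs!Suc i}" by (auto simp: doubleton_eq_iff)
    thus "{xs!x, xs!y} \<in> pedges xs" unfolding pedges_def using i len by auto
  next
    assume "{xs!x, xs!y} \<in> pedges xs"
    then obtain i where i: "{xs!x, xs!y} = {xs!i, xs!Suc i}" "Suc i < l"
      unfolding pedges_def using len by auto
    have "{x,y} = {i, Suc i}" using doubleton_inj[OF inj x y _ _ i(1)] i(2) by auto
    thus "{x,y} \<in> {{i, Suc i} | i. Suc i < l}" using i(2) by auto
  qed
  have "pedges xs \<subseteq> E" unfolding pedges_def using e len by auto
  moreover have "\<forall>e\<in>pedges xs. e \<subseteq> set xs" unfolding pedges_def using len by auto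
  moreover have "graph_iso {0..<l} {{i, Suc i} | i. Suc i < l} (set xs) (pedges xs)"
    unfolding graph_iso_def using bij iso by blast
  ultimately show ?thesis unfolding copies_def using s by auto
qed

lemma sigma_lemma:
  fixes \<sigma> :: "nat \<Rightarrow> nat"
  assumes l: "l \<ge> 2" and rng: "\<forall>i<l. \<sigma> i < l" and inj: "inj_on \<sigma> {0..<l}"
    and adj: "\<forall>i. Suc i < l \<longrightarrow> \<sigma> (Suc i) = Suc (\<sigma> i) \<or> \<sigma> i = Suc (\<sigma> (Suc i))"
  shows "(\<forall>i<l. \<sigma> i = i) \<or> (\<forall>i<l. \<sigma> i = l - 1 - i)"
proof (cases "\<sigma> 1 = Suc (\<sigma> 0)")
  case True
  have up: "\<sigma> (Suc i) = Suc (\<sigma> i)" if "Suc i < l" for i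
    using that
  proof (induction i)
    case 0 then show ?case using True by simp
  next
    case (Suc i)
    have IH: "\<sigma> (Suc i) = Suc (\<sigma> i)" using Suc by simp
    show ?case
    proof (rule ccontr)
      assume "\<sigma> (Suc (Suc i)) \<noteq> Suc (\<sigma> (Suc i))"
      hence "\<sigma> (Suc i) = Suc (\<sigma> (Suc (Suc i)))" using adj Suc.prems by blast
      hence "\<sigma> (Suc (Suc i)) = \<sigma> i" using IH by simp
      hence "Suc (Suc i) = i" using inj Suc.prems by (auto dest: inj_onD)
      thus False by simp
    qed
  qed
  have lin: "\<sigma> i = \<sigma> 0 + i" if "i < l" for i
    using that by (induction i) (auto simp: up)
  have "\<sigma> (l - 1) < l" using rng l by auto
  hence "\<sigma> 0 = 0" using lin[of "l-1"] l by auto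
  thus ?thesis using lin by auto
next
  case False
  hence F: "\<sigma> 0 = Suc (\<sigma> 1)" using adj l by (metis One_nat_def Suc_1 Suc_le_lessD)
  have down: "\<sigma> i = Suc (\<sigma> (Suc i))" if "Suc i < l" for i
    using that
  proof (induction i)
    case 0 then show ?case using F by simp
  next
    case (Suc i)
    have IH: "\<sigma> i = Suc (\<sigma> (Suc i))" using Suc by simp
    show ?case
    proof (rule ccontr)
      assume "\<sigma> (Suc i) \<noteq> Suc (\<sigma> (Suc (Suc i)))"
      hence "\<sigma> (Suc (Suc i)) = Suc (\<sigma> (Suc i))" using adj Suc.prems by blast
      hence "\<sigma> (Suc (Suc i)) = \<sigma> i" using IH by simp
      hence "Suc (Suc i) = i" using inj Suc.prems by (auto dest: inj_onD)
      thus False by simp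
    qed
  qed
  have lin: "\<sigma> i + i = \<sigma> 0" if "i < l" for i
    using that by (induction i) (auto simp: down)
  have "\<sigma> 0 < l" using rng l by auto
  hence "\<sigma> 0 = l - 1" using lin[of "l-1"] l by auto
  thus ?thesis using lin by (metis add_diff_cancel_right')
qed

lemma copy_OP:
  assumes sg: "simple_graph {0..<n} E"
    and c: "(V', E') \<in> copies {0..<l} {{i, Suc i} | i. Suc i < l} {0..<n} E"
  shows "\<exists>xs \<in> OP E n l. (set xs, pedges xs) = (V', E')"
proof -
  from c have V': "V' \<subseteq> {0..<n}" and E': "E' \<subseteq> E" and ev: "\<forall>e\<in>E'. e \<subseteq> V'"
    and iso: "graph_iso {0..<l} {{i, Suc i} | i. Suc i < l} V' E'" by (auto simp: copies_def)
  from iso obtain f where bij: "bij_betw f {0..<l} V'"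
    and fe0: "\<forall>x\<in>{0..<l}. \<forall>y\<in>{0..<l}. {x,y} \<in> {{i, Suc i} | i. Suc i < l} \<longleftrightarrow> {f x, f y} \<in> E'"
    unfolding graph_iso_def by blast
  have fe: "{x,y} \<in> {{i, Suc i} | i. Suc i < l} \<longleftrightarrow> {f x, f y} \<in> E'" if "x < l" "y < l" for x y
    using fe0 that by simp
  have inj: "inj_on f {0..<l}" using bij bij_betw_def by blast
  define xs where "xs = map f [0..<l]"
  have len: "length xs = l" by (simp add: xs_def)
  have nth: "xs ! i = f i" if "i < l" for i using that by (simp add: xs_def)
  have setx: "set xs = V'" using bij by (simp add: xs_def bij_betw_def)
  have dx: "distinct xs" using inj by (simp add: xs_def distinct_map)
  have edge: "{f i, f (Suc i)} \<in> E'" if "Suc i < l" for i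
  proof -
    have "{i, Suc i} \<in> {{i, Suc i} | i. Suc i < l}" using that by auto
    thus ?thesis using fe[of i "Suc i"] that by linarith
  qed
  have pe: "pedges xs = E'"
  proof
    show "pedges xs \<subseteq> E'"
    proof
      fix e assume "e \<in> pedges xs"
      then obtain i where i: "e = {xs!i, xs!Suc i}" "Suc i < l" unfolding pedges_def using len by auto
      have "e = {f i, f (Suc i)}" using i nth[of i] nth[of "Suc i"] by simp
      thus "e \<in> E'" using edge[OF i(2)] by simp
    qed
  next
    show "E' \<subseteq> pedges xs"
    proof
      fix e assume eE: "e \<in> E'"
      have sg': "\<forall>e\<in>E. \<exists>x y. x \<noteq> y \<and> e = {x, y} \<and> x \<in> {0..<n} \<and> y \<in> {0..<n}"
        using sg by (simp add: simple_graph_def)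
      have "e \<in> E" using eE E' by blast
      then obtain x y where xy: "e = {x,y}" "x \<noteq> y" "x < n" "y < n"
        using sg' by force
      have "x \<in> V'" "y \<in> V'" using ev eE xy by auto
      then obtain i j where ij: "i < l" "j < l" "x = f i" "y = f j"
        using bij unfolding bij_betw_def by fastforce
      have "{f i, f j} \<in> E'" using eE xy ij by simp
      hence "{i,j} \<in> {{i, Suc i} | i. Suc i < l}" using fe[OF ij(1,2)] by blast
      then obtain p where p: "{i,j} = {p, Suc p}" "Suc p < l" by blast
      have "e = {f p, f (Suc p)}" using p xy ij by (auto simp: doubleton_eq_iff)
      hence "e = {xs!p, xs!Suc p}" using nth[of p] nth[of "Suc p"] p(2) by simp
      thus "e \<in> pedges xs" unfolding pedges_def using p len by blast
    qed
  qed
  have "xs \<in> OP E n l" unfolding OP_def using len dx setx V' edge E' nth by auto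
  thus ?thesis using setx pe by blast
qed



lemma pedges_rev_sub:
  "pedges (rev xs) \<subseteq> pedges xs"
proof
  fix e assume "e \<in> pedges (rev xs)"
  then obtain i where i: "e = {rev xs!i, rev xs!Suc i}" "Suc i < length xs" unfolding pedges_def by auto
  define p where "p = length xs - Suc (Suc i)"
  have "rev xs ! i = xs ! Suc p" "rev xs ! Suc i = xs ! p" using i(2) by (auto simp: rev_nth p_def Suc_diff_Suc)
  hence "e = {xs!p, xs!Suc p}" using i by auto
  moreover have "Suc p < length xs" using i(2) by (simp add: p_def)
  ultimately show "e \<in> pedges xs" unfolding pedges_def by blast
qed

lemma pedges_rev: "pedges (rev xs) = pedges xs"
  using pedges_rev_sub[of xs] pedges_rev_sub[of "rev xs"] by auto

lemma OP_rev: assumes "xs \<in> OP E n l" shows "rev xs \<in> OP E n l"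
proof -
  have e: "{xs!i, xs!Suc i} \<in> E" if "Suc i < l" for i using assms that by (auto simp: OP_def)
  have len: "length xs = l" using assms by (auto simp: OP_def)
  have "{rev xs!i, rev xs!Suc i} \<in> E" if "Suc i < l" for i
  proof -
    define p where "p = l - Suc (Suc i)"
    have "rev xs ! i = xs ! Suc p" "rev xs ! Suc i = xs ! p" using that len by (auto simp: rev_nth p_def Suc_diff_Suc)
    moreover have "Suc p < l" using that by (simp add: p_def)
    ultimately show ?thesis using e[of p] by (simp add: insert_commute)
  qed
  thus ?thesis using assms by (auto simp: OP_def)
qed

lemma OP_rev_neq: assumes "xs \<in> OP E n l" "l \<ge> 2" shows "rev xs \<noteq> xs"
proof
  assume r: "rev xs = xs"
  have len: "length xs = l" and d: "distinct xs" using assms by (auto simp: OP_def)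
  have "rev xs ! 0 = xs ! (l - 1)" using len assms(2) by (simp add: rev_nth)
  hence "xs ! 0 = xs ! (l - 1)" using r by simp
  hence "0 = l - 1" using d len assms(2) by (simp add: nth_eq_iff_index_eq)
  thus False using assms(2) by simp
qed

lemma OP_fiber:
  assumes xs: "xs \<in> OP E n l" and ys: "ys \<in> OP E n l" and l: "l \<ge> 2"
    and st: "set xs = set ys" and pe: "pedges xs = pedges ys"
  shows "ys = xs \<or> ys = rev xs"
proof -
  have lx: "length xs = l" and dx: "distinct xs" and ly: "length ys = l" and dy: "distinct ys"
    using xs ys by (auto simp: OP_def)
  have injx: "inj_on (nth xs) {0..<l}" using dx lx by (simp add: inj_on_nth)
  define \<sigma> where "\<sigma> i = inv_into {0..<l} (nth xs) (ys!i)" for i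
  have img: "ys ! i \<in> nth xs ` {0..<l}" if "i < l" for i
  proof -
    have "ys ! i \<in> set xs" using st that ly by auto
    then obtain j where j: "j < l" "xs ! j = ys ! i" using lx by (auto simp: in_set_conv_nth)
    show ?thesis by (rule image_eqI[of _ _ j]) (use j in auto)
  qed
  have rng: "\<sigma> i < l" if "i < l" for i using inv_into_into[OF img[OF that]] by (simp add: \<sigma>_def)
  have sx: "xs ! (\<sigma> i) = ys ! i" if "i < l" for i using f_inv_into_f[OF img[OF that]] by (simp add: \<sigma>_def)
  have inj: "inj_on \<sigma> {0..<l}"
  proof (rule inj_onI)
    fix i j assume "i \<in> {0..<l}" "j \<in> {0..<l}" "\<sigma> i = \<sigma> j"
    hence "ys ! i = ys ! j" using sx by (metis atLeastLessThan_iff)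
    thus "i = j" using dy ly \<open>i \<in> {0..<l}\<close> \<open>j \<in> {0..<l}\<close> by (simp add: nth_eq_iff_index_eq)
  qed
  have adj: "\<sigma> (Suc i) = Suc (\<sigma> i) \<or> \<sigma> i = Suc (\<sigma> (Suc i))" if "Suc i < l" for i
  proof -
    have "{ys!i, ys!Suc i} \<in> pedges xs" using pe that ly unfolding pedges_def by auto
    then obtain p where p: "{ys!i, ys!Suc i} = {xs!p, xs!Suc p}" "Suc p < l" unfolding pedges_def using lx by auto
    hence "{xs!(\<sigma> i), xs!(\<sigma> (Suc i))} = {xs!p, xs!Suc p}" using sx that by simp
    hence "{\<sigma> i, \<sigma> (Suc i)} = {p, Suc p}"
      using doubleton_inj[OF injx, of "\<sigma> i" "\<sigma> (Suc i)" p "Suc p"] rng that p(2) by simp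
    thus ?thesis by (auto simp: doubleton_eq_iff)
  qed
  have "(\<forall>i<l. \<sigma> i = i) \<or> (\<forall>i<l. \<sigma> i = l - 1 - i)"
    using sigma_lemma[OF l _ inj] rng adj by blast
  thus ?thesis
  proof
    assume "\<forall>i<l. \<sigma> i = i"
    hence "ys = xs" using sx lx ly by (intro nth_equalityI) auto
    thus ?thesis by simp
  next
    assume a: "\<forall>i<l. \<sigma> i = l - 1 - i"
    have "ys = rev xs"
    proof (rule nth_equalityI)
      show "length ys = length (rev xs)" using lx ly by simp
    next
      fix i assume "i < length ys"
      hence i: "i < l" using ly by simp
      have "ys ! i = xs ! (l - 1 - i)" using sx[OF i] a i by simp
      also have "\<dots> = rev xs ! i" using i lx by (simp add: rev_nth)
      finally show "ys ! i = rev xs ! i" .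
    qed
    thus ?thesis by simp
  qed
qed

lemma card_OP_copies:
  assumes sg: "simple_graph {0..<n} E" and l: "l \<ge> 2"
  shows "card (OP E n l) = 2 * count_copies (fst (path_graph l)) (snd (path_graph l)) {0..<n} E"
proof -
  let ?C = "copies {0..<l} {{i, Suc i} | i. Suc i < l} {0..<n} E"
  define \<Phi> where "\<Phi> xs = (set xs, pedges xs)" for xs :: "nat list"
  define F where "F c = {xs \<in> OP E n l. \<Phi> xs = c}" for c
  have CS: "?C \<subseteq> \<Phi> ` OP E n l"
  proof
    fix c assume "c \<in> ?C"
    then obtain V' E' where c: "c = (V', E')" "(V',E') \<in> ?C" by (cases c) auto
    show "c \<in> \<Phi> ` OP E n l" using copy_OP[OF sg c(2)] c(1) unfolding \<Phi>_def by force
  qed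
  have finC: "finite ?C" using finite_subset[OF CS] finite_OP by blast
  have U: "OP E n l = (\<Union>c\<in>?C. F c)"
    using OP_copy unfolding F_def \<Phi>_def by auto
  have F2: "card (F c) = 2" if cC: "c \<in> ?C" for c
  proof -
    obtain xs where xs: "xs \<in> OP E n l" "\<Phi> xs = c" using subsetD[OF CS cC] by (elim imageE) simp
    have "F c = {xs, rev xs}"
    proof
      show "F c \<subseteq> {xs, rev xs}"
      proof
        fix ys assume "ys \<in> F c"
        hence "ys \<in> OP E n l" "\<Phi> ys = \<Phi> xs" using xs unfolding F_def by auto
        thus "ys \<in> {xs, rev xs}" using OP_fiber[OF xs(1) _ l] unfolding \<Phi>_def by auto
      qed
    next
      have "\<Phi> (rev xs) = c" using xs(2) unfolding \<Phi>_def by (simp add: pedges_rev)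
      thus "{xs, rev xs} \<subseteq> F c" using xs OP_rev[OF xs(1)] unfolding F_def by auto
    qed
    thus ?thesis using OP_rev_neq[OF xs(1) l] by auto
  qed
  have "card (OP E n l) = (\<Sum>c\<in>?C. card (F c))"
    unfolding U
  proof (rule card_UN_disjoint[OF finC])
    show "\<forall>c\<in>?C. finite (F c)" using finite_OP unfolding F_def by auto
    show "\<forall>c\<in>?C. \<forall>d\<in>?C. c \<noteq> d \<longrightarrow> F c \<inter> F d = {}" unfolding F_def by auto
  qed
  also have "\<dots> = 2 * card ?C" using F2 by simp
  finally show ?thesis by (simp add: count_copies_def path_graph_def)
qed



definition nbr :: "nat set set \<Rightarrow> nat \<Rightarrow> nat \<Rightarrow> nat set" where
  "nbr E n v = {u \<in> {0..<n}. {v,u} \<in> E}"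

lemma finite_nbr[simp]: "finite (nbr E n v)"
  unfolding nbr_def by auto

lemma OP_one: "card (OP E n 1) = n"
proof -
  have "OP E n 1 = (\<lambda>v. [v]) ` {0..<n}"
  proof
    show "OP E n 1 \<subseteq> (\<lambda>v. [v]) ` {0..<n}"
    proof
      fix xs assume "xs \<in> OP E n 1"
      hence "length xs = 1" "set xs \<subseteq> {0..<n}" by (auto simp: OP_def)
      then obtain v where "xs = [v]" "v < n" by (cases xs) auto
      thus "xs \<in> (\<lambda>v. [v]) ` {0..<n}" by auto
    qed
  qed (auto simp: OP_def)
  thus ?thesis by (simp add: card_image inj_on_def)
qed

lemma OP_ext:
  assumes sg: "simple_graph {0..<n} E" and deg: "\<forall>v<n. card (nbr E n v) \<ge> \<delta>" and j: "j \<ge> 1"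
  shows "card (OP E n (Suc j)) \<ge> card (OP E n j) * (\<delta> - j)"
proof -
  define S where "S = Sigma (OP E n j) (\<lambda>xs. nbr E n (last xs) - set xs)"
  define g where "g = (\<lambda>(xs::nat list, y::nat). xs @ [y])"
  have inj: "inj_on g S" unfolding g_def S_def inj_on_def by (auto simp: OP_def)
  have sub: "g ` S \<subseteq> OP E n (Suc j)"
  proof
    fix zs assume "zs \<in> g ` S"
    then obtain xs y where xy: "zs = xs @ [y]" "xs \<in> OP E n j" "y \<in> nbr E n (last xs)" "y \<notin> set xs"
      unfolding g_def S_def by auto
    have len: "length xs = j" and d: "distinct xs" and s: "set xs \<subseteq> {0..<n}"
      and e: "\<forall>i. Suc i < j \<longrightarrow> {xs!i, xs!Suc i} \<in> E" using xy(2) by (auto simp: OP_def)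
    have yn: "y < n" and ye: "{last xs, y} \<in> E" using xy(3) by (auto simp: nbr_def)
    have "{zs!i, zs!Suc i} \<in> E" if i: "Suc i < Suc j" for i
    proof (cases "Suc i < j")
      case True
      thus ?thesis using e xy(1) len by (simp add: nth_append)
    next
      case False
      hence "i = j - 1" using i by simp
      moreover have "xs \<noteq> []" using len j by auto
      hence "last xs = xs ! (j - 1)" using len by (simp add: last_conv_nth)
      ultimately show ?thesis using ye xy(1) len j by (simp add: nth_append)
    qed
    thus "zs \<in> OP E n (Suc j)" using xy len d s yn unfolding OP_def by auto
  qed
  have "card S = (\<Sum>xs\<in>OP E n j. card (nbr E n (last xs) - set xs))"
    unfolding S_def using finite_OP by (simp add: card_SigmaI)
  also have "\<dots> \<ge> (\<Sum>xs\<in>OP E n j. \<delta> - j)"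
  proof (rule sum_mono)
    fix xs assume xs: "xs \<in> OP E n j"
    have len: "length xs = j" and d: "distinct xs" and s: "set xs \<subseteq> {0..<n}" using xs by (auto simp: OP_def)
    have "last xs \<in> set xs" using len j by (metis One_nat_def last_in_set le_numeral_extra(2) list.size(3) not_one_le_zero)
    hence "last xs < n" using s by auto
    hence "\<delta> \<le> card (nbr E n (last xs))" using deg by auto
    moreover have "card (set xs) = j" using d len by (simp add: distinct_card)
    moreover have "card (nbr E n (last xs)) - card (set xs) \<le> card (nbr E n (last xs) - set xs)"
      by (rule diff_card_le_card_Diff) simp
    ultimately show "\<delta> - j \<le> card (nbr E n (last xs) - set xs)" by linarith
  qed
  finally have "card S \<ge> card (OP E n j) * (\<delta> - j)" by simp
  moreover have "card S = card (g ` S)" using inj by (simp add: card_image)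
  moreover have "card (g ` S) \<le> card (OP E n (Suc j))" using sub finite_OP by (rule card_mono[rotated])
  ultimately show ?thesis by linarith
qed

lemma card_OP_lower:
  assumes sg: "simple_graph {0..<n} E" and deg: "\<forall>v<n. card (nbr E n v) \<ge> \<delta>" and l: "l \<ge> 1"
  shows "card (OP E n l) \<ge> n * (\<delta> - l) ^ (l - 1)"
  using l
proof (induction l rule: dec_induct)
  case base
  then show ?case using OP_one by simp
next
  case (step m)
  have "n * (\<delta> - Suc m) ^ (Suc m - 1) = n * (\<delta> - Suc m) ^ (m - 1) * (\<delta> - Suc m)"
    using step(1) by (cases m) auto
  also have "\<dots> \<le> n * (\<delta> - m) ^ (m - 1) * (\<delta> - m)"
    by (intro mult_mono power_mono) auto
  also have "\<dots> \<le> card (OP E n m) * (\<delta> - m)" using step by (intro mult_right_mono) auto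
  also have "\<dots> \<le> card (OP E n (Suc m))" using OP_ext[OF sg deg step(1)] .
  finally show ?case .
qed

definition E0 :: "nat \<Rightarrow> nat set set" where
  "E0 n = {{x,y} | x y. x < n \<and> y < n \<and> odd (x + y)}"

lemma E0_odd: assumes "{a,b} \<in> E0 n" shows "odd (a + b)"
proof -
  obtain x y where "{a,b} = {x,y}" "odd (x+y)" using assms unfolding E0_def by auto
  thus ?thesis by (auto simp: doubleton_eq_iff add.commute)
qed

lemma E0_simple: "simple_graph {0..<n} (E0 n)"
  unfolding simple_graph_def
proof (intro conjI ballI)
  fix e assume "e \<in> E0 n"
  then obtain x y where xy: "e = {x,y}" "x < n" "y < n" "odd (x+y)" unfolding E0_def by blast
  hence "x \<noteq> y" by auto
  thus "\<exists>x y. x \<noteq> y \<and> e = {x, y} \<and> x \<in> {0..<n} \<and> y \<in> {0..<n}" using xy by auto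
qed simp

lemma E0_deg: assumes "v < n" shows "card (nbr (E0 n) n v) \<ge> n div 2"
proof -
  have sub: "{u. u < n \<and> odd (v + u)} \<subseteq> nbr (E0 n) n v" unfolding nbr_def E0_def using assms by auto
  have fin: "finite {u. u < n \<and> odd (v + u)}" by simp
  have "n div 2 \<le> card {u. u < n \<and> odd (v + u)}"
  proof (cases "even v")
    case True
    have A: "(\<lambda>j. 2*j+1) ` {..<n div 2} \<subseteq> {u. u < n \<and> odd (v + u)}" using True by auto
    moreover have "card ((\<lambda>j. 2*j+1) ` {..<n div 2}) = n div 2" by (simp add: card_image inj_on_def)
    ultimately show ?thesis using card_mono[OF fin A] by simp
  next
    case False
    have A: "(\<lambda>j. 2*j) ` {..<n div 2} \<subseteq> {u. u < n \<and> odd (v + u)}" using False by auto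
    moreover have "card ((\<lambda>j. 2*j) ` {..<n div 2}) = n div 2" by (simp add: card_image inj_on_def)
    ultimately show ?thesis using card_mono[OF fin A] by simp
  qed
  also have "\<dots> \<le> card (nbr (E0 n) n v)" using sub by (intro card_mono) auto
  finally show ?thesis .
qed

lemma E0_free:
  assumes "k \<ge> 1"
  shows "H_free (fst (cycle_graph (2*k+1))) (snd (cycle_graph (2*k+1))) {0..<n} (E0 n)"
proof -
  let ?L = "2*k+1"
  have "False" if c: "(V', E') \<in> copies {0..<?L} {{i, Suc i mod ?L} | i. i < ?L} {0..<n} (E0 n)" for V' E'
  proof -
    from c have E': "E' \<subseteq> E0 n" and iso: "graph_iso {0..<?L} {{i, Suc i mod ?L} | i. i < ?L} V' E'"
      by (auto simp: copies_def)
    from iso obtain f where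
      fe: "\<forall>x\<in>{0..<?L}. \<forall>y\<in>{0..<?L}. {x,y} \<in> {{i, Suc i mod ?L} | i. i < ?L} \<longleftrightarrow> {f x, f y} \<in> E'"
      unfolding graph_iso_def by blast
    have od: "odd (f i + f (Suc i mod ?L))" if "i < ?L" for i
    proof -
      have "{i, Suc i mod ?L} \<in> {{i, Suc i mod ?L} | i. i < ?L}" using that by blast
      moreover have "i \<in> {0..<?L}" "Suc i mod ?L \<in> {0..<?L}" using that by auto
      ultimately have "{f i, f (Suc i mod ?L)} \<in> E'" using fe by blast
      thus ?thesis using E' E0_odd by blast
    qed
    have par: "even (f i + i + f 0)" if "i < ?L" for i
      using that
    proof (induction i)
      case 0 then show ?case by simp
    next
      case (Suc i)
      have "odd (f i + f (Suc i))" using od[of i] Suc.prems by simp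
      moreover have "even (f i + i + f 0)" using Suc by simp
      ultimately show ?case by presburger
    qed
    have "even (f (2*k) + 2*k + f 0)" using par[of "2*k"] by simp
    moreover have "odd (f (2*k) + f 0)" using od[of "2*k"] by simp
    ultimately show False by presburger
  qed
  thus ?thesis unfolding H_free_def cycle_graph_def by fastforce
qed



definition WK :: "(nat \<Rightarrow> nat \<Rightarrow> bool) \<Rightarrow> nat \<Rightarrow> nat \<Rightarrow> nat list set" where
  "WK R n m = {xs. length xs = Suc m \<and> set xs \<subseteq> {0..<n} \<and> (\<forall>i<m. R (xs!i) (xs!Suc i))}"

definition dgR :: "(nat \<Rightarrow> nat \<Rightarrow> bool) \<Rightarrow> nat \<Rightarrow> nat \<Rightarrow> nat" where
  "dgR R n v = card {u. u < n \<and> R v u}"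

definition wa :: "(nat \<Rightarrow> nat \<Rightarrow> bool) \<Rightarrow> nat \<Rightarrow> nat list \<Rightarrow> real" where
  "wa R n xs = 1 / (\<Prod>x\<leftarrow>butlast xs. real (dgR R n x))"

definition wb :: "(nat \<Rightarrow> nat \<Rightarrow> bool) \<Rightarrow> nat \<Rightarrow> nat list \<Rightarrow> real" where
  "wb R n xs = 1 / (\<Prod>x\<leftarrow>tl xs. real (dgR R n x))"

lemma finite_WK: "finite (WK R n m)"
proof -
  have "WK R n m \<subseteq> {xs. set xs \<subseteq> {0..<n} \<and> length xs = Suc m}" by (auto simp: WK_def)
  thus ?thesis using finite_lists_length_eq[of "{0..<n}" "Suc m"] finite_subset by auto
qed

lemma WK_Suc_hd:
  "{xs \<in> WK R n (Suc m). hd xs = v} = (\<lambda>ys. v # ys) ` {ys \<in> WK R n m. R v (hd ys)}" if "v < n"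
proof
  show "{xs \<in> WK R n (Suc m). hd xs = v} \<subseteq> (\<lambda>ys. v # ys) ` {ys \<in> WK R n m. R v (hd ys)}"
  proof
    fix xs assume xs: "xs \<in> {xs \<in> WK R n (Suc m). hd xs = v}"
    then obtain ys where ys: "xs = v # ys" unfolding WK_def by (cases xs) auto
    have len: "length ys = Suc m" using xs ys by (simp add: WK_def)
    have r: "\<forall>i<Suc m. R (xs!i) (xs!Suc i)" using xs by (simp add: WK_def)
    have "R v (hd ys)" using r[rule_format, of 0] ys len by (cases ys) auto
    moreover have "\<forall>i<m. R (ys!i) (ys!Suc i)"
    proof (intro allI impI)
      fix i assume "i < m" thus "R (ys!i) (ys!Suc i)" using r[rule_format, of "Suc i"] ys by simp
    qed
    moreover have "set ys \<subseteq> {0..<n}" using xs ys by (simp add: WK_def)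
    ultimately show "xs \<in> (\<lambda>ys. v # ys) ` {ys \<in> WK R n m. R v (hd ys)}" using ys len by (auto simp: WK_def)
  qed
next
  show "(\<lambda>ys. v # ys) ` {ys \<in> WK R n m. R v (hd ys)} \<subseteq> {xs \<in> WK R n (Suc m). hd xs = v}"
  proof
    fix xs assume "xs \<in> (\<lambda>ys. v # ys) ` {ys \<in> WK R n m. R v (hd ys)}"
    then obtain ys where ys: "xs = v # ys" "ys \<in> WK R n m" "R v (hd ys)" by auto
    have len: "length ys = Suc m" using ys by (simp add: WK_def)
    have r: "\<forall>i<m. R (ys!i) (ys!Suc i)" using ys by (simp add: WK_def)
    have "\<forall>i<Suc m. R (xs!i) (xs!Suc i)"
    proof (intro allI impI)
      fix i assume i: "i < Suc m"
      show "R (xs!i) (xs!Suc i)"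
      proof (cases i)
        case 0 thus ?thesis using ys len by (cases ys) auto
      next
        case (Suc j) thus ?thesis using r i ys by simp
      qed
    qed
    thus "xs \<in> {xs \<in> WK R n (Suc m). hd xs = v}" using ys len that by (auto simp: WK_def)
  qed
qed

lemma sum_wa_hd:
  assumes "v < n"
  shows "(\<Sum>xs \<in> {xs \<in> WK R n m. hd xs = v}. wa R n xs) \<le> 1"
  using assms
proof (induction m arbitrary: v)
  case 0
  have "{xs \<in> WK R n 0. hd xs = v} = {[v]}"
  proof
    show "{xs \<in> WK R n 0. hd xs = v} \<subseteq> {[v]}"
    proof
      fix xs assume xs: "xs \<in> {xs \<in> WK R n 0. hd xs = v}"
      hence "length xs = 1" "hd xs = v" by (auto simp: WK_def)
      thus "xs \<in> {[v]}" by (cases xs) auto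
    qed
  qed (use 0 in \<open>auto simp: WK_def\<close>)
  thus ?case by (simp add: wa_def)
next
  case (Suc m)
  define S where "S = {ys \<in> WK R n m. R v (hd ys)}"
  define N where "N = {u. u < n \<and> R v u}"
  have finS: "finite S" using finite_WK unfolding S_def by auto
  have finN: "finite N" unfolding N_def by auto
  have ne: "ys \<noteq> []" if "ys \<in> S" for ys using that unfolding S_def WK_def by auto
  have "(\<Sum>ys\<in>S. wa R n ys) = (\<Sum>u\<in>N. \<Sum>ys\<in>{ys. ys \<in> S \<and> hd ys = u}. wa R n ys)"
  proof (rule sum.group[symmetric, OF finS finN])
    show "hd ` S \<subseteq> N"
    proof
      fix u assume "u \<in> hd ` S"
      then obtain ys where "ys \<in> S" "u = hd ys" by auto
      moreover have "hd ys \<in> set ys" using ne[OF \<open>ys \<in> S\<close>] by simp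
      ultimately show "u \<in> N" unfolding S_def N_def WK_def by auto
    qed
  qed
  also have "\<dots> \<le> (\<Sum>u\<in>N. 1)"
  proof (rule sum_mono)
    fix u assume u: "u \<in> N"
    have "{ys. ys \<in> S \<and> hd ys = u} = {xs \<in> WK R n m. hd xs = u}" using u unfolding S_def N_def by auto
    thus "(\<Sum>ys\<in>{ys. ys \<in> S \<and> hd ys = u}. wa R n ys) \<le> 1" using Suc.IH[of u] u unfolding N_def by auto
  qed
  also have "\<dots> = real (dgR R n v)" unfolding N_def dgR_def by simp
  finally have le: "(\<Sum>ys\<in>S. wa R n ys) \<le> real (dgR R n v)" .
  have "(\<Sum>xs \<in> {xs \<in> WK R n (Suc m). hd xs = v}. wa R n xs) = (\<Sum>ys\<in>S. wa R n (v # ys))"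
    unfolding WK_Suc_hd[OF Suc.prems] S_def by (subst sum.reindex) (auto simp: inj_on_def)
  also have "\<dots> = (\<Sum>ys\<in>S. wa R n ys / real (dgR R n v))"
    using ne by (intro sum.cong) (auto simp: wa_def)
  also have "\<dots> = (\<Sum>ys\<in>S. wa R n ys) / real (dgR R n v)" by (simp add: sum_divide_distrib)
  also have "\<dots> \<le> 1"
  proof (cases "dgR R n v = 0")
    case True thus ?thesis by simp
  next
    case False thus ?thesis using le by (simp add: divide_le_eq)
  qed
  finally show ?case .
qed

lemma sum_wa: "(\<Sum>xs \<in> WK R n m. wa R n xs) \<le> real n"
proof -
  have "(\<Sum>xs \<in> WK R n m. wa R n xs) = (\<Sum>v\<in>{0..<n}. \<Sum>xs\<in>{xs. xs \<in> WK R n m \<and> hd xs = v}. wa R n xs)"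
  proof (rule sum.group[symmetric, OF finite_WK])
    show "hd ` WK R n m \<subseteq> {0..<n}"
    proof
      fix u assume "u \<in> hd ` WK R n m"
      then obtain ys where ys: "ys \<in> WK R n m" "u = hd ys" by auto
      hence "ys \<noteq> []" by (auto simp: WK_def)
      hence "hd ys \<in> set ys" by simp
      thus "u \<in> {0..<n}" using ys by (auto simp: WK_def)
    qed
  qed simp
  also have "\<dots> \<le> (\<Sum>v\<in>{0..<n}. 1)" by (rule sum_mono) (use sum_wa_hd in auto)
  finally show ?thesis by simp
qed

lemma WK_rev:
  assumes sym: "\<And>x y. R x y \<Longrightarrow> R y x" and xs: "xs \<in> WK R n m"
  shows "rev xs \<in> WK R n m"
proof -
  have len: "length xs = Suc m" and r: "\<forall>i<m. R (xs!i) (xs!Suc i)" using xs by (auto simp: WK_def)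
  have "R (rev xs ! i) (rev xs ! Suc i)" if i: "i < m" for i
  proof -
    define p where "p = m - Suc i"
    have "rev xs ! i = xs ! Suc p" "rev xs ! Suc i = xs ! p" using i len by (auto simp: rev_nth p_def Suc_diff_Suc)
    moreover have "p < m" using i by (simp add: p_def)
    ultimately show ?thesis using r sym by auto
  qed
  thus ?thesis using xs by (auto simp: WK_def)
qed

lemma sum_wb:
  assumes sym: "\<And>x y. R x y \<Longrightarrow> R y x"
  shows "(\<Sum>xs \<in> WK R n m. wb R n xs) \<le> real n"
proof -
  have img: "rev ` WK R n m = WK R n m"
  proof
    show "rev ` WK R n m \<subseteq> WK R n m" using WK_rev[OF sym] by auto
    show "WK R n m \<subseteq> rev ` WK R n m"
    proof
      fix xs assume "xs \<in> WK R n m"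
      hence "rev xs \<in> WK R n m" using WK_rev[OF sym] by auto
      thus "xs \<in> rev ` WK R n m" by (rule image_eqI[rotated]) simp
    qed
  qed
  have "(\<Sum>xs \<in> WK R n m. wb R n xs) = (\<Sum>xs \<in> WK R n m. wa R n (rev xs))"
    by (intro sum.cong) (auto simp: wa_def wb_def rev_map[symmetric])
  also have "\<dots> = (\<Sum>xs \<in> rev ` WK R n m. wa R n xs)"
    by (subst sum.reindex) (auto simp: inj_on_def)
  also have "\<dots> = (\<Sum>xs \<in> WK R n m. wa R n xs)" using img by simp
  finally show ?thesis using sum_wa by simp
qed

lemma chain_prod:
  assumes sym: "\<And>x y. R x y \<Longrightarrow> R y x" and bnd: "\<And>x y. R x y \<Longrightarrow> x < n \<and> y < n"
    and deg: "\<And>x y. R x y \<Longrightarrow> real (dgR R n x) + real (dgR R n y) \<le> s"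
  shows "xs \<noteq> [] \<Longrightarrow> (\<forall>i. Suc i < length xs \<longrightarrow> R (xs!i) (xs!Suc i)) \<Longrightarrow>
    0 < (\<Prod>x\<leftarrow>butlast xs. real (dgR R n x)) \<and> 0 < (\<Prod>x\<leftarrow>tl xs. real (dgR R n x)) \<and>
    (\<Prod>x\<leftarrow>butlast xs. real (dgR R n x)) * (\<Prod>x\<leftarrow>tl xs. real (dgR R n x)) \<le> ((s/2)^2)^(length xs - 1)"
proof (induction xs)
  case Nil thus ?case by simp
next
  case (Cons x ys)
  show ?case
  proof (cases ys)
    case Nil thus ?thesis by simp
  next
    case (Cons y zs)
    have rxy: "R x y" using Cons.prems(2)[rule_format, of 0] Cons by simp
    have r': "\<forall>i. Suc i < length ys \<longrightarrow> R (ys!i) (ys!Suc i)"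
      using Cons.prems(2) by (auto)
    have IH: "0 < (\<Prod>x\<leftarrow>butlast ys. real (dgR R n x)) \<and> 0 < (\<Prod>x\<leftarrow>tl ys. real (dgR R n x)) \<and>
      (\<Prod>x\<leftarrow>butlast ys. real (dgR R n x)) * (\<Prod>x\<leftarrow>tl ys. real (dgR R n x)) \<le> ((s/2)^2)^(length ys - 1)"
      using Cons.IH r' Cons by simp
    have dx: "dgR R n x \<ge> 1"
    proof -
      have "y \<in> {u. u < n \<and> R x u}" using rxy bnd by auto
      hence "{u. u < n \<and> R x u} \<noteq> {}" by auto
      thus ?thesis unfolding dgR_def by (simp add: Suc_le_eq card_gt_0_iff)
    qed
    have dy: "dgR R n y \<ge> 1"
    proof -
      have "x \<in> {u. u < n \<and> R y u}" using rxy bnd sym by auto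
      hence "{u. u < n \<and> R y u} \<noteq> {}" by auto
      thus ?thesis unfolding dgR_def by (simp add: Suc_le_eq card_gt_0_iff)
    qed
    have sxy: "real (dgR R n x) + real (dgR R n y) \<le> s" using deg rxy by blast
    have pxy: "real (dgR R n x) * real (dgR R n y) \<le> (s/2)^2"
    proof -
      have "4 * (real (dgR R n x) * real (dgR R n y)) \<le> (real (dgR R n x) + real (dgR R n y))^2"
      proof -
        have "(real (dgR R n x) + real (dgR R n y))^2 - 4 * (real (dgR R n x) * real (dgR R n y))
              = (real (dgR R n x) - real (dgR R n y))^2" by (simp add: power2_eq_square algebra_simps)
        thus ?thesis using zero_le_power2[of "real (dgR R n x) - real (dgR R n y)"] by linarith
      qed
      also have "\<dots> \<le> s^2" using sxy dx dy by (intro power_mono) auto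
      finally show ?thesis by (simp add: power_divide)
    qed
    define P where "P = (\<Prod>x\<leftarrow>butlast ys. real (dgR R n x))"
    define Q where "Q = (\<Prod>x\<leftarrow>tl ys. real (dgR R n x))"
    have bl: "(\<Prod>x\<leftarrow>butlast (x # ys). real (dgR R n x)) = real (dgR R n x) * P"
      using Cons by (simp add: P_def)
    have tl: "(\<Prod>x\<leftarrow>tl (x # ys). real (dgR R n x)) = real (dgR R n y) * Q"
      using Cons by (simp add: Q_def)
    have "real (dgR R n x) * P * (real (dgR R n y) * Q) = (real (dgR R n x) * real (dgR R n y)) * (P * Q)"
      by (simp add: algebra_simps)
    also have "\<dots> \<le> (s/2)^2 * ((s/2)^2)^(length ys - 1)"
      using pxy IH dx dy unfolding P_def Q_def
      by (intro mult_mono) (auto intro!: mult_nonneg_nonneg less_imp_le)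
    also have "\<dots> = ((s/2)^2)^(length (x # ys) - 1)" using Cons by simp
    finally show ?thesis using bl tl IH dx dy unfolding P_def Q_def by auto
  qed
qed

lemma walk_bound:
  assumes sym: "\<And>x y. R x y \<Longrightarrow> R y x" and bnd: "\<And>x y. R x y \<Longrightarrow> x < n \<and> y < n"
    and deg: "\<And>x y. R x y \<Longrightarrow> real (dgR R n x) + real (dgR R n y) \<le> s" and s: "s \<ge> 0"
  shows "real (card (WK R n m)) \<le> real n * (s/2)^m"
proof -
  define c where "c = (s/2)^m"
  have c0: "c \<ge> 0" using s by (simp add: c_def)
  have one: "1 \<le> c / 2 * (wa R n xs + wb R n xs)" if xs: "xs \<in> WK R n m" for xs
  proof -
    have ne: "xs \<noteq> []" and len: "length xs = Suc m" using xs by (auto simp: WK_def)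
    have ch: "\<forall>i. Suc i < length xs \<longrightarrow> R (xs!i) (xs!Suc i)" using xs by (auto simp: WK_def)
    define P where "P = (\<Prod>x\<leftarrow>butlast xs. real (dgR R n x))"
    define Q where "Q = (\<Prod>x\<leftarrow>tl xs. real (dgR R n x))"
    have PQ: "0 < P" "0 < Q" "P * Q \<le> c^2"
    proof -
      have "((s/2)^m)^2 = ((s/2)^2)^m"
        using power_mult[of "s/2" m 2] power_mult[of "s/2" 2 m] by (simp add: mult.commute)
      thus "0 < P" "0 < Q" "P * Q \<le> c^2"
        using chain_prod[OF sym bnd deg ne ch] len unfolding P_def Q_def c_def by auto
    qed
    have "(2 * (P*Q))^2 = 4 * (P*Q) * (P*Q)" by (simp add: power2_eq_square)
    also have "\<dots> \<le> 4 * (P*Q) * c^2" using PQ by (intro mult_left_mono) auto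
    also have "\<dots> \<le> (P+Q)^2 * c^2"
    proof -
      have "(P+Q)^2 - 4 * (P*Q) = (P - Q)^2" by (simp add: power2_eq_square algebra_simps)
      hence "4 * (P*Q) \<le> (P+Q)^2" using zero_le_power2[of "P - Q"] by linarith
      thus ?thesis by (intro mult_right_mono) auto
    qed
    also have "\<dots> = (c * (P + Q))^2" by (simp add: power_mult_distrib mult.commute)
    finally have sq: "(2 * (P*Q))^2 \<le> (c * (P + Q))^2" .
    have nn: "0 \<le> c * (P + Q)" using PQ c0 by simp
    have le2: "2 * (P*Q) \<le> c * (P + Q)" using power2_le_imp_le[OF sq nn] .
    have pos: "0 < 2 * (P * Q)" using PQ by simp
    have "1 \<le> c * (P + Q) / (2 * (P * Q))" using le_divide_eq_1_pos[OF pos] le2 by simp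
    also have "c * (P + Q) / (2 * (P * Q)) = c / 2 * (1/P + 1/Q)" using PQ by (simp add: field_simps)
    finally show ?thesis unfolding wa_def wb_def P_def Q_def .
  qed
  have "real (card (WK R n m)) = (\<Sum>xs\<in>WK R n m. 1)" by simp
  also have "\<dots> \<le> (\<Sum>xs\<in>WK R n m. c / 2 * (wa R n xs + wb R n xs))"
    by (rule sum_mono) (use one in auto)
  also have "\<dots> = c / 2 * ((\<Sum>xs\<in>WK R n m. wa R n xs) + (\<Sum>xs\<in>WK R n m. wb R n xs))"
    by (simp only: sum_distrib_left[symmetric] sum.distrib)
  also have "\<dots> \<le> c / 2 * (real n + real n)"
    using sum_wa sum_wb[OF sym] c0 by (intro mult_left_mono add_mono) auto
  finally show ?thesis by (simp add: c_def mult.commute)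
qed



lemma no_loop:
  assumes sg: "simple_graph {0..<n} E" shows "x \<notin> nbr E n x"
  using simple_edge[OF sg, of x x] unfolding nbr_def by auto

lemma find_path:
  assumes sg: "simple_graph {0..<n} E" and W: "W \<subseteq> {0..<n}" "W \<noteq> {}"
    and deg: "\<forall>v\<in>W. card (nbr E n v \<inter> W) \<ge> t - 1" and t: "t \<ge> 1"
  shows "\<exists>xs. length xs = t \<and> distinct xs \<and> set xs \<subseteq> W \<and> (\<forall>i. Suc i < t \<longrightarrow> {xs!i, xs!Suc i} \<in> E)"
proof -
  have "\<forall>j. 1 \<le> j \<longrightarrow> j \<le> t \<longrightarrow> (\<exists>xs. length xs = j \<and> distinct xs \<and> set xs \<subseteq> W \<and> (\<forall>i. Suc i < j \<longrightarrow> {xs!i, xs!Suc i} \<in> E))"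
  proof (intro allI)
    fix j show "1 \<le> j \<longrightarrow> j \<le> t \<longrightarrow> (\<exists>xs. length xs = j \<and> distinct xs \<and> set xs \<subseteq> W \<and> (\<forall>i. Suc i < j \<longrightarrow> {xs!i, xs!Suc i} \<in> E))"
    proof (induction j)
      case 0 then show ?case by simp
    next
      case (Suc j)
      show ?case
      proof (intro impI)
        assume j1: "1 \<le> Suc j" and jt: "Suc j \<le> t"
        show "\<exists>xs. length xs = Suc j \<and> distinct xs \<and> set xs \<subseteq> W \<and> (\<forall>i. Suc i < Suc j \<longrightarrow> {xs!i, xs!Suc i} \<in> E)"
        proof (cases "j = 0")
          case True
          obtain w where "w \<in> W" using W by auto
          thus ?thesis using True by (intro exI[of _ "[w]"]) auto
        next
          case False
          then obtain xs where xs: "length xs = j" "distinct xs" "set xs \<subseteq> W"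
            "\<forall>i. Suc i < j \<longrightarrow> {xs!i, xs!Suc i} \<in> E" using Suc.IH jt by auto
          have ne: "xs \<noteq> []" using xs(1) False by auto
          define x where "x = last xs"
          have xW: "x \<in> W" using ne xs(3) unfolding x_def by auto
          have xn: "x < n" using xW W by auto
          have cx: "card (nbr E n x \<inter> W) \<ge> j" using deg xW jt by auto
          have "\<not> (nbr E n x \<inter> W \<subseteq> set xs - {x})"
          proof
            assume "nbr E n x \<inter> W \<subseteq> set xs - {x}"
            hence "card (nbr E n x \<inter> W) \<le> card (set xs - {x})" by (intro card_mono) auto
            also have "\<dots> = j - 1" using xs(1,2) ne unfolding x_def by (simp add: distinct_card)
            finally show False using cx False by simp
          qed
          then obtain y where y: "y \<in> nbr E n x" "y \<in> W" "y \<notin> set xs"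
            using no_loop[OF sg, of x] by auto
          have "{(xs @ [y])!i, (xs @ [y])!Suc i} \<in> E" if i: "Suc i < Suc j" for i
          proof (cases "Suc i < j")
            case True thus ?thesis using xs(1,4) by (simp add: nth_append)
          next
            case F: False
            hence ij: "i = j - 1" using i by simp
            have "x = xs ! (j - 1)" using ne xs(1) unfolding x_def by (simp add: last_conv_nth)
            moreover have "{x, y} \<in> E" using y unfolding nbr_def by auto
            ultimately show ?thesis using ij xs(1) False by (simp add: nth_append)
          qed
          thus ?thesis using xs y by (intro exI[of _ "xs @ [y]"]) auto
        qed
      qed
    qed
  qed
  thus ?thesis using t by auto
qed

lemma edge_bound:
  assumes sg: "simple_graph {0..<n} E" and W: "W \<subseteq> {0..<n}" and t: "t \<ge> 1"
    and nop: "\<not> (\<exists>xs. length xs = t \<and> distinct xs \<and> set xs \<subseteq> W \<and> (\<forall>i. Suc i < t \<longrightarrow> {xs!i, xs!Suc i} \<in> E))"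
  shows "(\<Sum>v\<in>W. card (nbr E n v \<inter> W)) \<le> 2 * (t - 1) * card W"
  using W nop
proof (induction "card W" arbitrary: W rule: less_induct)
  case less
  show ?case
  proof (cases "W = {}")
    case True thus ?thesis by simp
  next
    case False
    have finW: "finite W" using less.prems(1) finite_subset by auto
    obtain w where w: "w \<in> W" "card (nbr E n w \<inter> W) < t - 1"
      using find_path[OF sg less.prems(1) False _ t] less.prems(2) by force
    define W' where "W' = W - {w}"
    have W'sub: "W' \<subseteq> {0..<n}" using less.prems(1) unfolding W'_def by auto
    have nop': "\<not> (\<exists>xs. length xs = t \<and> distinct xs \<and> set xs \<subseteq> W' \<and> (\<forall>i. Suc i < t \<longrightarrow> {xs!i, xs!Suc i} \<in> E))"
      using less.prems(2) unfolding W'_def by blast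
    have cW': "card W' = card W - 1" using w finW unfolding W'_def by simp
    have IH: "(\<Sum>v\<in>W'. card (nbr E n v \<inter> W')) \<le> 2 * (t - 1) * card W'"
      using less.hyps[OF _ W'sub nop'] cW' w finW False by (simp add: card_gt_0_iff)
    have split: "(\<Sum>v\<in>W. card (nbr E n v \<inter> W)) = card (nbr E n w \<inter> W) + (\<Sum>v\<in>W'. card (nbr E n v \<inter> W))"
      unfolding W'_def using finW w by (simp add: sum.remove)
    have each: "card (nbr E n v \<inter> W) \<le> card (nbr E n v \<inter> W') + (if v \<in> nbr E n w then 1 else 0)"
      if v: "v \<in> W'" for v
    proof -
      have "nbr E n v \<inter> W \<subseteq> (nbr E n v \<inter> W') \<union> (nbr E n v \<inter> {w})" unfolding W'_def by auto
      hence "card (nbr E n v \<inter> W) \<le> card ((nbr E n v \<inter> W') \<union> (nbr E n v \<inter> {w}))"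
        by (intro card_mono) auto
      also have "\<dots> \<le> card (nbr E n v \<inter> W') + card (nbr E n v \<inter> {w})" by (rule card_Un_le)
      also have "card (nbr E n v \<inter> {w}) \<le> (if v \<in> nbr E n w then 1 else 0)"
      proof (cases "w \<in> nbr E n v")
        case True
        hence "v \<in> nbr E n w" using v W'sub w less.prems(1) unfolding nbr_def by (auto simp: insert_commute)
        thus ?thesis by (simp add: card_le_Suc0_iff_eq)
      next
        case False
        hence "nbr E n v \<inter> {w} = {}" by auto
        thus ?thesis by simp
      qed
      finally show ?thesis by simp
    qed
    have "(\<Sum>v\<in>W'. card (nbr E n v \<inter> W)) \<le> (\<Sum>v\<in>W'. card (nbr E n v \<inter> W') + (if v \<in> nbr E n w then 1 else 0))"
      by (rule sum_mono) (use each in auto)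
    also have "\<dots> = (\<Sum>v\<in>W'. card (nbr E n v \<inter> W')) + (\<Sum>v\<in>W'. (if v \<in> nbr E n w then 1 else 0))"
      by (simp add: sum.distrib)
    also have "(\<Sum>v\<in>W'. (if v \<in> nbr E n w then 1 else 0)) = card {v \<in> W'. v \<in> nbr E n w}"
      using finW unfolding W'_def by (simp add: sum.inter_filter[symmetric])
    also have "card {v \<in> W'. v \<in> nbr E n w} \<le> card (nbr E n w \<inter> W)"
      by (intro card_mono) (auto simp: W'_def)
    finally have "(\<Sum>v\<in>W'. card (nbr E n v \<inter> W)) \<le> 2 * (t - 1) * card W' + card (nbr E n w \<inter> W)"
      using IH by linarith
    hence "(\<Sum>v\<in>W. card (nbr E n v \<inter> W)) \<le> 2 * (t - 1) * (card W - 1) + 2 * (t - 1)"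
    proof -
      have "2 * (t - 1) * card W' = 2 * (t - 1) * (card W - 1)" using cW' by simp
      thus ?thesis using split w(2) \<open>(\<Sum>v\<in>W'. card (nbr E n v \<inter> W)) \<le> 2 * (t - 1) * card W' + card (nbr E n w \<inter> W)\<close> by linarith
    qed
    also have "\<dots> = 2 * (t - 1) * card W" using False finW
      by (cases "card W") (simp_all add: mult_Suc_right)
    finally show ?thesis .
  qed
qed

lemma cycle_copy:
  assumes d: "distinct cs" and len: "length cs = L" and s: "set cs \<subseteq> {0..<n}"
    and e: "\<forall>i<L. {cs!i, cs!(Suc i mod L)} \<in> E"
  shows "copies (fst (cycle_graph L)) (snd (cycle_graph L)) {0..<n} E \<noteq> {}"
proof -
  let ?CE = "{{i, Suc i mod L} | i. i < L}"
  define E' where "E' = {{cs!i, cs!(Suc i mod L)} | i. i < L}"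
  have bij: "bij_betw (nth cs) {0..<L} (set cs)" using d len by (intro bij_betw_nth) auto
  have inj: "inj_on (nth cs) {0..<L}" using bij bij_betw_def by blast
  have iso: "{x,y} \<in> ?CE \<longleftrightarrow> {cs!x, cs!y} \<in> E'"
    if x: "x \<in> {0..<L}" and y: "y \<in> {0..<L}" for x y
  proof
    assume "{x,y} \<in> ?CE"
    then obtain i where i: "{x,y} = {i, Suc i mod L}" "i < L" by auto
    hence "{cs!x, cs!y} = {cs!i, cs!(Suc i mod L)}" by (auto simp: doubleton_eq_iff)
    thus "{cs!x, cs!y} \<in> E'" unfolding E'_def using i by auto
  next
    assume "{cs!x, cs!y} \<in> E'"
    then obtain i where i: "{cs!x, cs!y} = {cs!i, cs!(Suc i mod L)}" "i < L"
      unfolding E'_def by auto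
    have "Suc i mod L \<in> {0..<L}" using i(2) by auto
    hence "{x,y} = {i, Suc i mod L}" using doubleton_inj[OF inj x y _ _ i(1)] i(2) by auto
    thus "{x,y} \<in> ?CE" using i(2) by auto
  qed
  have "E' \<subseteq> E" unfolding E'_def using e by auto
  moreover have "\<forall>e\<in>E'. e \<subseteq> set cs"
  proof
    fix e assume "e \<in> E'"
    then obtain i where i: "e = {cs!i, cs!(Suc i mod L)}" "i < L" unfolding E'_def by auto
    have "Suc i mod L < L" using i(2) by simp
    thus "e \<subseteq> set cs" using i len by (auto intro!: nth_mem)
  qed
  moreover have "graph_iso {0..<L} ?CE (set cs) E'"
    unfolding graph_iso_def using bij iso by blast
  ultimately have "(set cs, E') \<in> copies {0..<L} ?CE {0..<n} E" unfolding copies_def using s by auto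
  thus ?thesis unfolding cycle_graph_def by auto
qed

lemma nbhd_no_path:
  assumes sg: "simple_graph {0..<n} E"
    and free: "H_free (fst (cycle_graph (2*k+1))) (snd (cycle_graph (2*k+1))) {0..<n} E"
    and k: "k \<ge> 1" and u: "u < n"
  shows "\<not> (\<exists>xs. length xs = 2*k \<and> distinct xs \<and> set xs \<subseteq> nbr E n u \<and> (\<forall>i. Suc i < 2*k \<longrightarrow> {xs!i, xs!Suc i} \<in> E))"
proof
  assume "\<exists>xs. length xs = 2*k \<and> distinct xs \<and> set xs \<subseteq> nbr E n u \<and> (\<forall>i. Suc i < 2*k \<longrightarrow> {xs!i, xs!Suc i} \<in> E)"
  then obtain xs where xs: "length xs = 2*k" "distinct xs" "set xs \<subseteq> nbr E n u"
    "\<forall>i. Suc i < 2*k \<longrightarrow> {xs!i, xs!Suc i} \<in> E" by blast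
  define cs where "cs = u # xs"
  have uxs: "u \<notin> set xs" using xs(3) no_loop[OF sg, of u] by auto
  have d: "distinct cs" using xs(2) uxs by (simp add: cs_def)
  have len: "length cs = 2*k+1" using xs(1) by (simp add: cs_def)
  have s: "set cs \<subseteq> {0..<n}" using xs(3) u unfolding cs_def nbr_def by auto
  have nb: "{u, xs!j} \<in> E" if "j < 2*k" for j
  proof -
    have "xs!j \<in> set xs" using that xs(1) by simp
    thus ?thesis using xs(3) unfolding nbr_def by auto
  qed
  have e: "\<forall>i<2*k+1. {cs!i, cs!(Suc i mod (2*k+1))} \<in> E"
  proof (intro allI impI)
    fix i assume i: "i < 2*k+1"
    show "{cs!i, cs!(Suc i mod (2*k+1))} \<in> E"
    proof (cases "i = 2*k")
      case True
      hence "Suc i mod (2*k+1) = 0" by simp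
      moreover have "cs ! i = xs ! (2*k - 1)" using True k by (simp add: cs_def nth_Cons')
      ultimately show ?thesis using nb[of "2*k-1"] k by (simp add: cs_def insert_commute)
    next
      case False
      hence si: "Suc i mod (2*k+1) = Suc i" using i by simp
      show ?thesis
      proof (cases i)
        case 0 thus ?thesis using si nb[of 0] k by (simp add: cs_def)
      next
        case (Suc j)
        thus ?thesis using si xs(4) False i by (simp add: cs_def)
      qed
    qed
  qed
  have "copies (fst (cycle_graph (2*k+1))) (snd (cycle_graph (2*k+1))) {0..<n} E \<noteq> {}"
    by (rule cycle_copy[OF d len s e])
  thus False using free unfolding H_free_def by simp
qed



lemma OP_upper:
  assumes sg: "simple_graph {0..<n} E"
    and free: "H_free (fst (cycle_graph (2*k+1))) (snd (cycle_graph (2*k+1))) {0..<n} E"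
    and k: "k \<ge> 1" and l: "l \<ge> 2" and tau: "\<tau> > 0"
  shows "real (card (OP E n l)) \<le> real n * ((real n + \<tau>)/2)^(l-1)
           + real (l-1) * (2 * (2*real k - 1) * real n ^ 2 / \<tau>) * real n ^ (l-2)"
proof -
  define cd where "cd u v = card (nbr E n u \<inter> nbr E n v)" for u v
  define R where "R u v = (u < n \<and> v < n \<and> {u,v} \<in> E \<and> real (cd u v) < \<tau>)" for u v
  define Bad where "Bad = Sigma {0..<n} (\<lambda>u. {v \<in> nbr E n u. \<tau> \<le> real (cd u v)})"
  define B where "B i = {xs \<in> OP E n l. (xs!i, xs!Suc i) \<in> Bad}" for i
  have sym: "R y x" if "R x y" for x y
    using that unfolding R_def cd_def by (auto simp: insert_commute Int_commute)
  have bnd: "x < n \<and> y < n" if "R x y" for x y using that unfolding R_def by auto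
  have deg: "real (dgR R n x) + real (dgR R n y) \<le> real n + \<tau>" if r: "R x y" for x y
  proof -
    have dx: "dgR R n x \<le> card (nbr E n x)" unfolding dgR_def
      by (intro card_mono) (auto simp: R_def nbr_def)
    have dy: "dgR R n y \<le> card (nbr E n y)" unfolding dgR_def
      by (intro card_mono) (auto simp: R_def nbr_def)
    have "card (nbr E n x) + card (nbr E n y) = card (nbr E n x \<union> nbr E n y) + cd x y"
      unfolding cd_def by (rule card_Un_Int) auto
    moreover have "card (nbr E n x \<union> nbr E n y) \<le> n"
    proof -
      have "card (nbr E n x \<union> nbr E n y) \<le> card {0..<n}" by (intro card_mono) (auto simp: nbr_def)
      thus ?thesis by simp
    qed
    moreover have "real (cd x y) < \<tau>" using r unfolding R_def by auto
    ultimately show ?thesis using dx dy by linarith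
  qed
  have WKb: "real (card (WK R n (l-1))) \<le> real n * ((real n + \<tau>)/2)^(l-1)"
    using walk_bound[of R n "real n + \<tau>" "l-1"] sym bnd deg tau by auto
  have finB: "finite Bad" unfolding Bad_def by auto
  have cover: "OP E n l \<subseteq> WK R n (l-1) \<union> (\<Union>i\<in>{..<l-1}. B i)"
  proof
    fix xs assume xs: "xs \<in> OP E n l"
    show "xs \<in> WK R n (l-1) \<union> (\<Union>i\<in>{..<l-1}. B i)"
    proof (cases "\<exists>i<l-1. (xs!i, xs!Suc i) \<in> Bad")
      case True thus ?thesis using xs unfolding B_def by auto
    next
      case False
      have len: "length xs = l" and s: "set xs \<subseteq> {0..<n}" and e: "\<forall>i. Suc i < l \<longrightarrow> {xs!i, xs!Suc i} \<in> E"
        using xs by (auto simp: OP_def)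
      have "R (xs!i) (xs!Suc i)" if i: "i < l - 1" for i
      proof -
        have m1: "xs!i \<in> set xs" "xs!Suc i \<in> set xs" using len i by (auto intro!: nth_mem)
        have lt: "xs!i < n" "xs!Suc i < n" using m1 s by auto
        have ed: "{xs!i, xs!Suc i} \<in> E" using e i by auto
        hence "xs!Suc i \<in> nbr E n (xs!i)" using lt unfolding nbr_def by auto
        hence "\<not> \<tau> \<le> real (cd (xs!i) (xs!Suc i))" using False i lt unfolding Bad_def by auto
        thus ?thesis using lt ed unfolding R_def by auto
      qed
      moreover have "length xs = Suc (l-1)" using len l by simp
      ultimately have "xs \<in> WK R n (l-1)" using s unfolding WK_def by auto
      thus ?thesis by simp
    qed
  qed
  have cardB: "card (B i) \<le> card Bad * n ^ (l-2)" if i: "i < l - 1" for i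
  proof -
    define L where "L = {ys. set ys \<subseteq> {0..<n} \<and> length ys = l - 2}"
    define h where "h xs = ((xs!i, xs!Suc i), take i xs @ drop (Suc (Suc i)) xs)" for xs :: "nat list"
    have inj: "inj_on h (B i)"
    proof (rule inj_onI)
      fix xs ys assume xs: "xs \<in> B i" and ys: "ys \<in> B i" and eq: "h xs = h ys"
      have lx: "length xs = l" and ly: "length ys = l" using xs ys unfolding B_def OP_def by auto
      have "take i xs @ drop (Suc (Suc i)) xs = take i ys @ drop (Suc (Suc i)) ys"
        and n1: "xs!i = ys!i" and n2: "xs!Suc i = ys!Suc i" using eq unfolding h_def by auto
      moreover have "length (take i xs) = i" "length (take i ys) = i" using lx ly i by auto
      ultimately have t: "take i xs = take i ys" and d: "drop (Suc (Suc i)) xs = drop (Suc (Suc i)) ys"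
        by (metis append_eq_append_conv)+
      have dec: "zs = take i zs @ zs!i # zs!Suc i # drop (Suc (Suc i)) zs" if "length zs = l" for zs
      proof -
        have "zs = take i zs @ drop i zs" by simp
        also have "drop i zs = zs!i # drop (Suc i) zs" using that i by (simp add: Cons_nth_drop_Suc)
        also have "drop (Suc i) zs = zs!Suc i # drop (Suc (Suc i)) zs" using that i by (simp add: Cons_nth_drop_Suc)
        finally show ?thesis .
      qed
      show "xs = ys" using dec[OF lx] dec[OF ly] t d n1 n2 by metis
    qed
    have img: "h ` B i \<subseteq> Bad \<times> L"
    proof
      fix p assume "p \<in> h ` B i"
      then obtain xs where xs: "xs \<in> B i" "p = h xs" by auto
      have lx: "length xs = l" and s: "set xs \<subseteq> {0..<n}" using xs unfolding B_def OP_def by auto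
      have "set (take i xs @ drop (Suc (Suc i)) xs) \<subseteq> {0..<n}"
        using s set_take_subset[of i xs] set_drop_subset[of "Suc (Suc i)" xs] by auto
      moreover have "length (take i xs @ drop (Suc (Suc i)) xs) = l - 2" using lx i by auto
      ultimately show "p \<in> Bad \<times> L" using xs unfolding h_def L_def B_def by auto
    qed
    have finL: "finite L" unfolding L_def using finite_lists_length_eq[of "{0..<n}"] by auto
    have "card (B i) = card (h ` B i)" using inj by (simp add: card_image)
    also have "\<dots> \<le> card (Bad \<times> L)" using img finB finL by (intro card_mono) auto
    also have "\<dots> = card Bad * n ^ (l-2)" unfolding L_def by (simp add: card_cartesian_product card_lists_length_eq)
    finally show ?thesis .
  qed
  have codeg: "(\<Sum>v\<in>nbr E n u. cd u v) \<le> 2 * (2*k - 1) * n" if u: "u < n" for u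
  proof -
    have W: "nbr E n u \<subseteq> {0..<n}" unfolding nbr_def by auto
    have "(\<Sum>v\<in>nbr E n u. card (nbr E n v \<inter> nbr E n u)) \<le> 2 * (2*k - 1) * card (nbr E n u)"
      using edge_bound[OF sg W _ nbhd_no_path[OF sg free k u]] k by simp
    also have "\<dots> \<le> 2 * (2*k - 1) * n"
    proof -
      have "card (nbr E n u) \<le> card {0..<n}" using W by (intro card_mono) auto
      thus ?thesis by simp
    qed
    finally show ?thesis unfolding cd_def by (simp add: Int_commute)
  qed
  have badsum: "real (card Bad) * \<tau> \<le> 2 * (2*real k - 1) * real n ^ 2"
  proof -
    have "real (card Bad) * \<tau> = (\<Sum>p\<in>Bad. \<tau>)" by simp
    also have "\<dots> \<le> (\<Sum>p\<in>Bad. real (cd (fst p) (snd p)))"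
      by (rule sum_mono) (auto simp: Bad_def)
    also have "\<dots> = (\<Sum>u\<in>{0..<n}. \<Sum>v\<in>{v \<in> nbr E n u. \<tau> \<le> real (cd u v)}. real (cd u v))"
      unfolding Bad_def by (subst sum.Sigma) (auto simp: split_beta)
    also have "\<dots> \<le> (\<Sum>u\<in>{0..<n}. \<Sum>v\<in>nbr E n u. real (cd u v))"
      by (intro sum_mono sum_mono2) auto
    also have "\<dots> \<le> (\<Sum>u\<in>{0..<n}. real (2 * (2*k - 1) * n))"
    proof (rule sum_mono)
      fix u assume "u \<in> {0..<n}"
      hence "(\<Sum>v\<in>nbr E n u. cd u v) \<le> 2 * (2*k - 1) * n" using codeg by auto
      hence "real (\<Sum>v\<in>nbr E n u. cd u v) \<le> real (2 * (2*k - 1) * n)" by linarith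
      thus "(\<Sum>v\<in>nbr E n u. real (cd u v)) \<le> real (2 * (2*k - 1) * n)" by simp
    qed
    also have "\<dots> = 2 * (2*real k - 1) * real n ^ 2" using k by (simp add: of_nat_diff power2_eq_square)
    finally show ?thesis .
  qed
  have cardBad: "real (card Bad) \<le> 2 * (2*real k - 1) * real n ^ 2 / \<tau>"
    using badsum tau by (simp add: le_divide_eq)
  have finWK: "finite (WK R n (l-1))" by (rule finite_WK)
  have "card (OP E n l) \<le> card (WK R n (l-1) \<union> (\<Union>i\<in>{..<l-1}. B i))"
    using cover finWK finite_OP unfolding B_def by (intro card_mono) auto
  also have "\<dots> \<le> card (WK R n (l-1)) + card (\<Union>i\<in>{..<l-1}. B i)" by (rule card_Un_le)
  also have "card (\<Union>i\<in>{..<l-1}. B i) \<le> (\<Sum>i\<in>{..<l-1}. card (B i))" by (rule card_UN_le) simp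
  also have "\<dots> \<le> (\<Sum>i\<in>{..<l-1}. card Bad * n ^ (l-2))" by (rule sum_mono) (use cardB in auto)
  finally have c1: "card (OP E n l) \<le> card (WK R n (l-1)) + (l-1) * (card Bad * n ^ (l-2))" by simp
  hence "real (card (OP E n l)) \<le> real (card (WK R n (l-1))) + real (l-1) * (real (card Bad) * real n ^ (l-2))"
    by (metis of_nat_add of_nat_le_iff of_nat_mult of_nat_power)
  also have "\<dots> \<le> real n * ((real n + \<tau>)/2)^(l-1) + real (l-1) * (2 * (2*real k - 1) * real n ^ 2 / \<tau> * real n ^ (l-2))"
    using WKb cardBad by (intro add_mono mult_left_mono mult_right_mono) auto
  finally show ?thesis by (simp add: mult.assoc)
qed



lemma half_pow:
  assumes "l \<ge> 1"
  shows "(x/2) * ((x/2) * a)^(l-1) = (x/2::real)^l * a^(l-1)"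
proof -
  obtain m where m: "l = Suc m" using assms by (cases l) auto
  show ?thesis unfolding m by (simp only: power_mult_distrib diff_Suc_1 power_Suc mult.assoc)
qed

lemma lim_inv_sqrt: "((\<lambda>n. 1 / sqrt (real n)) \<longlongrightarrow> 0) sequentially"
proof -
  have "((\<lambda>n. sqrt (1 / real n)) \<longlongrightarrow> sqrt 0) sequentially"
    using tendsto_real_sqrt[OF lim_1_over_n] by simp
  thus ?thesis by (simp add: real_sqrt_divide)
qed

lemma gen_ex_bounds:
  fixes k l n :: nat
  assumes k: "k \<ge> 1" and l: "l \<ge> 2" and n: "n \<ge> 2*l+1"
  shows "(real n/2)^l * (1 - (2*real l+1)/real n)^(l-1) \<le> real (gen_ex n (path_graph l) (cycle_graph (2 * k + 1)))"
    and "real (gen_ex n (path_graph l) (cycle_graph (2 * k + 1))) \<le>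
          (real n/2)^l * ((1 + 1/sqrt (real n))^(l-1) + real (l-1) * (2*real k - 1) * 2^l / sqrt (real n))"
proof -
  define S where "S = {count_copies (fst (path_graph l)) (snd (path_graph l)) {0..<n} E | E.
       simple_graph {0..<n} E \<and> H_free (fst (cycle_graph (2*k+1))) (snd (cycle_graph (2*k+1))) {0..<n} E}"
  have ge: "gen_ex n (path_graph l) (cycle_graph (2 * k + 1)) = Max S" unfolding gen_ex_def S_def by simp
  have finS: "finite S"
  proof -
    have "{E. simple_graph {0..<n} E} \<subseteq> Pow (Pow {0..<n})" unfolding simple_graph_def by auto
    hence "finite {E. simple_graph {0..<n} E}" by (rule finite_subset) simp
    hence "finite ((\<lambda>E. count_copies (fst (path_graph l)) (snd (path_graph l)) {0..<n} E) ` {E. simple_graph {0..<n} E})"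
      by simp
    moreover have "S \<subseteq> (\<lambda>E. count_copies (fst (path_graph l)) (snd (path_graph l)) {0..<n} E) ` {E. simple_graph {0..<n} E}"
      unfolding S_def by auto
    ultimately show ?thesis using finite_subset by blast
  qed
  have E0S: "count_copies (fst (path_graph l)) (snd (path_graph l)) {0..<n} (E0 n) \<in> S"
    unfolding S_def using E0_simple E0_free[OF k] by blast
  have npos: "real n > 0" using n by simp
  have dl: "n div 2 \<ge> l" using n by linarith
  have "card (OP (E0 n) n l) \<ge> n * (n div 2 - l) ^ (l - 1)"
    using card_OP_lower[of n "E0 n" "n div 2" l] E0_simple[of n] E0_deg[of _ n] l by auto
  hence lowc: "real (card (OP (E0 n) n l)) \<ge> real n * real (n div 2 - l) ^ (l - 1)"
    by (metis of_nat_le_iff of_nat_mult of_nat_power)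
  have "n \<le> 2 * (n div 2) + 1" by linarith
  hence "real n \<le> 2 * real (n div 2) + 1" by linarith
  hence "real (n div 2) \<ge> (real n - 1)/2" by simp
  hence base: "real (n div 2 - l) \<ge> (real n - 1)/2 - real l" using dl by (simp add: of_nat_diff)
  have base0: "(real n - 1)/2 - real l \<ge> 0" using n by simp
  have "(real n/2)^l * (1 - (2*real l+1)/real n)^(l-1) = (real n/2) * ((real n/2) * (1 - (2*real l+1)/real n))^(l-1)"
    using half_pow[of l "real n" "1 - (2*real l+1)/real n"] l by simp
  also have "(real n/2) * (1 - (2*real l+1)/real n) = (real n - 1)/2 - real l"
    using npos by (simp add: field_simps)
  also have "(real n/2) * ((real n - 1)/2 - real l)^(l-1) \<le> (real n/2) * real (n div 2 - l) ^ (l - 1)"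
    using base base0 by (intro mult_left_mono power_mono) auto
  also have "\<dots> \<le> real (card (OP (E0 n) n l)) / 2" using lowc by simp
  also have "\<dots> = real (count_copies (fst (path_graph l)) (snd (path_graph l)) {0..<n} (E0 n))"
    using card_OP_copies[OF E0_simple l] by simp
  also have "\<dots> \<le> real (Max S)" using Max_ge[OF finS E0S] by simp
  finally show "(real n/2)^l * (1 - (2*real l+1)/real n)^(l-1) \<le> real (gen_ex n (path_graph l) (cycle_graph (2 * k + 1)))"
    using ge by simp
  have "S \<noteq> {}" using E0S by auto
  hence "Max S \<in> S" using finS by simp
  then obtain E where E: "simple_graph {0..<n} E"
    "H_free (fst (cycle_graph (2*k+1))) (snd (cycle_graph (2*k+1))) {0..<n} E"
    "Max S = count_copies (fst (path_graph l)) (snd (path_graph l)) {0..<n} E"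
    unfolding S_def by auto
  have sq: "sqrt (real n) > 0" using npos by simp
  have "real (Max S) = real (card (OP E n l)) / 2" using E(3) card_OP_copies[OF E(1) l] by simp
  also have "\<dots> \<le> (real n * ((real n + sqrt (real n))/2)^(l-1)
           + real (l-1) * (2 * (2*real k - 1) * real n ^ 2 / sqrt (real n)) * real n ^ (l-2)) / 2"
    using OP_upper[OF E(1) E(2) k l sq] by (intro divide_right_mono) auto
  also have "\<dots> = (real n/2)^l * ((1 + 1/sqrt (real n))^(l-1) + real (l-1) * (2*real k - 1) * 2^l / sqrt (real n))"
  proof -
    have a: "(real n + sqrt (real n))/2 = (real n/2) * (1 + 1/sqrt (real n))"
      using sq real_div_sqrt[of "real n"] by (simp add: field_simps)
    have b: "real n * ((real n + sqrt (real n))/2)^(l-1) / 2 = (real n/2)^l * (1 + 1/sqrt (real n))^(l-1)"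
    proof -
      have "real n * ((real n + sqrt (real n))/2)^(l-1) / 2 = (real n/2) * ((real n/2) * (1 + 1/sqrt (real n)))^(l-1)"
        unfolding a by simp
      also have "\<dots> = (real n/2)^l * (1 + 1/sqrt (real n))^(l-1)" by (rule half_pow) (use l in simp)
      finally show ?thesis .
    qed
    obtain m where m: "l = Suc (Suc m)" using l by (metis add_2_eq_Suc le_Suc_ex)
    have c: "real (l-1) * (2 * (2*real k - 1) * real n ^ 2 / sqrt (real n)) * real n ^ (l-2) / 2
          = (real n/2)^l * (real (l-1) * (2*real k - 1) * 2^l / sqrt (real n))"
    proof -
      have p1: "real n ^ 2 * real n ^ (l-2) = real n ^ l" unfolding m by (simp add: power2_eq_square)
      have p2: "(real n/2)^l * 2^l = real n ^ l" by (simp add: power_divide)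
      have "real (l-1) * (2 * (2*real k - 1) * real n ^ 2 / sqrt (real n)) * real n ^ (l-2) / 2
            = real (l-1) * (2*real k - 1) * (real n ^ 2 * real n ^ (l-2)) / sqrt (real n)"
        using sq by (simp add: field_simps)
      also have "\<dots> = real (l-1) * (2*real k - 1) * ((real n/2)^l * 2^l) / sqrt (real n)"
        unfolding p1 p2 ..
      also have "\<dots> = (real n/2)^l * (real (l-1) * (2*real k - 1) * 2^l / sqrt (real n))"
        by (simp add: algebra_simps)
      finally show ?thesis .
    qed
    show ?thesis using b c by (simp add: add_divide_distrib distrib_left)
  qed
  finally show "real (gen_ex n (path_graph l) (cycle_graph (2 * k + 1))) \<le>
          (real n/2)^l * ((1 + 1/sqrt (real n))^(l-1) + real (l-1) * (2*real k - 1) * 2^l / sqrt (real n))"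
    using ge by simp
qed

theorem theorem19:
  fixes k l :: nat
  assumes "k \<ge> 1" and "l \<ge> 2"
  shows "(\<lambda>n. real (gen_ex n (path_graph l) (cycle_graph (2 * k + 1))))
           \<sim>[at_top] (\<lambda>n. (real n / 2) ^ l)"
proof (rule asymp_equivI')
  define f where "f n = real (gen_ex n (path_graph l) (cycle_graph (2 * k + 1)))" for n
  define g where "g n = (real n / 2) ^ l" for n :: nat
  define Lo where "Lo n = (1 - (2*real l+1)/real n)^(l-1)" for n :: nat
  define Up where "Up n = (1 + 1/sqrt (real n))^(l-1) + real (l-1) * (2*real k - 1) * 2^l / sqrt (real n)" for n :: nat
  have ev: "eventually (\<lambda>n. Lo n \<le> f n / g n \<and> f n / g n \<le> Up n) at_top"
  proof (rule eventually_at_top_linorderI[of "2*l+1"])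
    fix n assume n: "n \<ge> 2*l+1"
    have gpos: "g n > 0" using n unfolding g_def by simp
    have b1: "g n * Lo n \<le> f n" using gen_ex_bounds(1)[OF assms n] unfolding f_def g_def Lo_def .
    have b2: "f n \<le> g n * Up n" using gen_ex_bounds(2)[OF assms n] unfolding f_def g_def Up_def .
    show "Lo n \<le> f n / g n \<and> f n / g n \<le> Up n"
      using b1 b2 gpos by (simp add: le_divide_eq divide_le_eq mult.commute)
  qed
  have L1: "(Lo \<longlongrightarrow> 1) at_top"
  proof -
    have "((\<lambda>n. (2*real l+1) * (1 / real n)) \<longlongrightarrow> (2*real l+1) * 0) sequentially"
      by (intro tendsto_mult tendsto_const lim_1_over_n)
    hence "((\<lambda>n. 1 - (2*real l+1) * (1 / real n)) \<longlongrightarrow> 1 - 0) sequentially"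
      by (intro tendsto_diff tendsto_const) simp
    hence "((\<lambda>n. (1 - (2*real l+1) * (1 / real n))^(l-1)) \<longlongrightarrow> 1 ^ (l-1)) sequentially"
      by (intro tendsto_power) simp
    thus ?thesis unfolding Lo_def by simp
  qed
  have U1: "(Up \<longlongrightarrow> 1) at_top"
  proof -
    have "((\<lambda>n. (1 + 1/sqrt (real n))^(l-1) + real (l-1) * (2*real k - 1) * 2^l * (1 / sqrt (real n)))
          \<longlongrightarrow> (1 + 0)^(l-1) + real (l-1) * (2*real k - 1) * 2^l * 0) sequentially"
      by (intro tendsto_add tendsto_power tendsto_mult tendsto_const lim_inv_sqrt)
    thus ?thesis unfolding Up_def by simp
  qed
  have "((\<lambda>n. f n / g n) \<longlongrightarrow> 1) at_top"
    by (rule tendsto_sandwich[OF _ _ L1 U1]) (use ev in \<open>auto elim: eventually_mono\<close>)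
  thus "((\<lambda>n. real (gen_ex n (path_graph l) (cycle_graph (2 * k + 1))) / (real n / 2) ^ l) \<longlongrightarrow> 1) at_top"
    unfolding f_def g_def .
qed


end
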